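(* Let $G$ be a connected graph with a cut-vertex $v$, and let $R\subseteq V(G)$ be such that at least two connected components of $G-v$ contain elements of $R$. If $x,y\in V(G)$ satisfy $d(v,x)\neq d(v,y)$, then there exists $r\in R$ with $r\neq v$ such that $d(r,x)\neq d(r,y)$.
   Context: All graphs are finite and simple. For vertices $u,w$ of a connected graph $G$, $d(u,w)$ is the length of a shortest $u$–$w$ path in $G$. A cut-vertex is a vertex $v$ such that $G-v$ is disconnected. $R$ need not be a resolving set. *)

theory Defs
  imports Main
begin

definition simple_graph :: "'a set \<Rightarrow> ('a \<Rightarrow> 'a \<Rightarrow> bool) \<Rightarrow> bool" where
  "simple_graph V E \<longleftrightarrow> finite V \<and> (\<forall>u w. E u w \<longrightarrow> u \<in> V \<and> w \<in> V)
     \<and> (\<forall>u w. E u w \<longrightarrow> E w u) \<and> (\<forall>u. \<not> E u u)"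

definition walk_in :: "'a set \<Rightarrow> ('a \<Rightarrow> 'a \<Rightarrow> bool) \<Rightarrow> 'a list \<Rightarrow> bool" where
  "walk_in S E xs \<longleftrightarrow> xs \<noteq> [] \<and> set xs \<subseteq> S
     \<and> (\<forall>i. Suc i < length xs \<longrightarrow> E (xs ! i) (xs ! Suc i))"

definition reach :: "'a set \<Rightarrow> ('a \<Rightarrow> 'a \<Rightarrow> bool) \<Rightarrow> 'a \<Rightarrow> 'a \<Rightarrow> bool" where
  "reach S E u w \<longleftrightarrow> (\<exists>xs. walk_in S E xs \<and> hd xs = u \<and> last xs = w)"

definition connected_on :: "'a set \<Rightarrow> ('a \<Rightarrow> 'a \<Rightarrow> bool) \<Rightarrow> bool" where
  "connected_on S E \<longleftrightarrow> S \<noteq> {} \<and> (\<forall>u\<in>S. \<forall>w\<in>S. reach S E u w)"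

definition components_on :: "'a set \<Rightarrow> ('a \<Rightarrow> 'a \<Rightarrow> bool) \<Rightarrow> 'a set set" where
  "components_on S E = (\<lambda>u. {w \<in> S. reach S E u w}) ` S"

definition gdist :: "'a set \<Rightarrow> ('a \<Rightarrow> 'a \<Rightarrow> bool) \<Rightarrow> 'a \<Rightarrow> 'a \<Rightarrow> nat" where
  "gdist V E u w = (LEAST n. \<exists>xs. walk_in V E xs \<and> hd xs = u \<and> last xs = w \<and> length xs = Suc n)"

definition cut_vertex :: "'a set \<Rightarrow> ('a \<Rightarrow> 'a \<Rightarrow> bool) \<Rightarrow> 'a \<Rightarrow> bool" where
  "cut_vertex V E v \<longleftrightarrow> v \<in> V \<and> V - {v} \<noteq> {} \<and> \<not> connected_on (V - {v}) E"

end

theory Submission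
  imports Defs
begin

lemma walk_single[simp]: "walk_in S E [a] \<longleftrightarrow> a \<in> S"
  by (auto simp: walk_in_def)

lemma walk_cons2[simp]: "walk_in S E (a # b # xs) \<longleftrightarrow> a \<in> S \<and> E a b \<and> walk_in S E (b # xs)"
proof
  assume h: "walk_in S E (a # b # xs)"
  then have "E a b" unfolding walk_in_def by (metis Suc_less_eq length_Cons nth_Cons_0 nth_Cons_Suc zero_less_Suc)
  moreover have "walk_in S E (b # xs)" using h unfolding walk_in_def
    by (metis (no_types, lifting) Suc_less_eq insert_subset length_Cons list.distinct(1) list.simps(15) nth_Cons_Suc)
  ultimately show "a \<in> S \<and> E a b \<and> walk_in S E (b # xs)" using h by (auto simp: walk_in_def)
next
  assume h: "a \<in> S \<and> E a b \<and> walk_in S E (b # xs)"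
  show "walk_in S E (a # b # xs)" unfolding walk_in_def
  proof (intro conjI allI impI)
    fix i assume "Suc i < length (a # b # xs)"
    then show "E ((a # b # xs) ! i) ((a # b # xs) ! Suc i)" using h
      by (cases i) (auto simp: walk_in_def)
  qed (use h in \<open>auto simp: walk_in_def\<close>)
qed

lemma walk_append:
  "walk_in S E xs \<Longrightarrow> walk_in S E ys \<Longrightarrow> last xs = hd ys \<Longrightarrow>
   walk_in S E (xs @ tl ys) \<and> hd (xs @ tl ys) = hd xs \<and> last (xs @ tl ys) = last ys"
proof (induction xs rule: induct_list012)
  case 1 then show ?case by (simp add: walk_in_def)
next
  case (2 a) then show ?case by (cases ys) (auto simp: walk_in_def)
next
  case (3 a b zs)
  then show ?case by auto
qed

lemma walk_rev:
  assumes "walk_in S E xs" "\<forall>u w. E u w \<longrightarrow> E w u"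
  shows "walk_in S E (rev xs)"
  unfolding walk_in_def
proof (intro conjI allI impI)
  fix i assume i: "Suc i < length (rev xs)"
  define j where "j = length xs - Suc (Suc i)"
  have "E (xs ! j) (xs ! Suc j)" using assms(1) i unfolding walk_in_def j_def by auto
  moreover have "rev xs ! i = xs ! Suc j" "rev xs ! Suc i = xs ! j"
    using i by (auto simp: rev_nth j_def Suc_diff_Suc)
  ultimately show "E (rev xs ! i) (rev xs ! Suc i)" using assms(2) by metis
qed (use assms in \<open>auto simp: walk_in_def\<close>)

lemma walk_take:
  assumes "walk_in S E xs" "i < length xs"
  shows "walk_in S E (take (Suc i) xs)"
  using assms unfolding walk_in_def
  by (auto dest: in_set_takeD)

lemma walk_drop:
  assumes "walk_in S E xs" "i < length xs"
  shows "walk_in S E (drop i xs)"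
  using assms unfolding walk_in_def
  by (auto dest: in_set_dropD)

lemma reach_sym:
  "reach S E u w \<Longrightarrow> \<forall>u w. E u w \<longrightarrow> E w u \<Longrightarrow> reach S E w u"
  unfolding reach_def
  by (metis walk_rev hd_rev last_rev)

lemma reach_trans:
  "reach S E u w \<Longrightarrow> reach S E w z \<Longrightarrow> reach S E u z"
  unfolding reach_def by (metis walk_append)

lemma reach_in: "reach S E u w \<Longrightarrow> w \<in> S"
  unfolding reach_def walk_in_def by auto

lemma reach_in1: "reach S E u w \<Longrightarrow> u \<in> S"
  unfolding reach_def walk_in_def by auto

lemma gdist_le:
  "walk_in V E xs \<Longrightarrow> hd xs = u \<Longrightarrow> last xs = w \<Longrightarrow> gdist V E u w \<le> length xs - 1"
proof -
  assume h: "walk_in V E xs" "hd xs = u" "last xs = w"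
  then have "xs \<noteq> []" by (simp add: walk_in_def)
  then have "length xs = Suc (length xs - 1)" by (cases xs) auto
  then show ?thesis unfolding gdist_def using h by (intro Least_le) blast
qed

lemma gdist_ex:
  assumes "reach V E u w"
  shows "\<exists>xs. walk_in V E xs \<and> hd xs = u \<and> last xs = w \<and> length xs = Suc (gdist V E u w)"
proof -
  from assms obtain xs where "walk_in V E xs" "hd xs = u" "last xs = w" unfolding reach_def by auto
  then have "\<exists>n xs. walk_in V E xs \<and> hd xs = u \<and> last xs = w \<and> length xs = Suc n"
    by (metis Suc_pred length_greater_0_conv walk_in_def)
  then show ?thesis unfolding gdist_def by (rule LeastI_ex)
qed

lemma gdist_tri:
  assumes "reach V E u w" "reach V E w z"
  shows "gdist V E u z \<le> gdist V E u w + gdist V E w z"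
proof -
  obtain xs where xs: "walk_in V E xs" "hd xs = u" "last xs = w" "length xs = Suc (gdist V E u w)"
    using gdist_ex[OF assms(1)] by blast
  obtain ys where ys: "walk_in V E ys" "hd ys = w" "last ys = z" "length ys = Suc (gdist V E w z)"
    using gdist_ex[OF assms(2)] by blast
  have "walk_in V E (xs @ tl ys) \<and> hd (xs @ tl ys) = u \<and> last (xs @ tl ys) = z"
    using walk_append[OF xs(1) ys(1)] xs ys by auto
  then have "gdist V E u z \<le> length (xs @ tl ys) - 1" using gdist_le by metis
  then show ?thesis using xs ys by auto
qed

lemma gdist_split:
  assumes "walk_in V E xs" "hd xs = r" "last xs = x" "length xs = Suc (gdist V E r x)"
    and "v \<in> set xs"
  shows "gdist V E r x \<ge> gdist V E r v + gdist V E v x"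
proof -
  obtain i where i: "i < length xs" "xs ! i = v" using assms(5) by (auto simp: in_set_conv_nth)
  have "walk_in V E (take (Suc i) xs)" using walk_take[OF assms(1) i(1)] .
  moreover have "hd (take (Suc i) xs) = r" using assms(2) i(1) by (cases xs) auto
  moreover have "last (take (Suc i) xs) = v" using i by (simp add: take_Suc_conv_app_nth)
  ultimately have a: "gdist V E r v \<le> i" using gdist_le[of V E "take (Suc i) xs" r v] i by auto
  have "walk_in V E (drop i xs)" using walk_drop[OF assms(1) i(1)] .
  moreover have "hd (drop i xs) = v" using i by (simp add: hd_drop_conv_nth)
  moreover have "last (drop i xs) = x" using assms(3) i(1) by simp
  ultimately have b: "gdist V E v x \<le> length xs - i - 1" using gdist_le[of V E "drop i xs" v x] by auto
  show ?thesis using a b i assms(4) by linarith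
qed

lemma gdist_through:
  assumes "connected_on V E" "r \<in> V" "x \<in> V" "\<not> reach (V - {v}) E r x" and v: "v \<in> V"
  shows "gdist V E r x = gdist V E r v + gdist V E v x"
proof -
  have rr: "\<And>a b. a \<in> V \<Longrightarrow> b \<in> V \<Longrightarrow> reach V E a b" using assms(1) by (auto simp: connected_on_def)
  obtain xs where xs: "walk_in V E xs" "hd xs = r" "last xs = x" "length xs = Suc (gdist V E r x)"
    using gdist_ex[OF rr[OF assms(2,3)]] by blast
  have "v \<in> set xs"
  proof (rule ccontr)
    assume "v \<notin> set xs"
    then have "walk_in (V - {v}) E xs" using xs(1) by (auto simp: walk_in_def)
    then show False using assms(4) xs unfolding reach_def by blast
  qed
  then have "gdist V E r x \<ge> gdist V E r v + gdist V E v x" using gdist_split[OF xs] by blast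
  moreover have "gdist V E r x \<le> gdist V E r v + gdist V E v x"
    using gdist_tri[OF rr[OF assms(2) v] rr[OF v assms(3)]] .
  ultimately show ?thesis by linarith
qed

theorem lemma1:
  fixes V :: "'a set" and E :: "'a \<Rightarrow> 'a \<Rightarrow> bool" and v x y :: 'a and R :: "'a set"
  assumes "simple_graph V E"
    and "connected_on V E"
    and "cut_vertex V E v"
    and "R \<subseteq> V"
    and "\<exists>C1\<in>components_on (V - {v}) E. \<exists>C2\<in>components_on (V - {v}) E.
           C1 \<noteq> C2 \<and> C1 \<inter> R \<noteq> {} \<and> C2 \<inter> R \<noteq> {}"
    and "x \<in> V" and "y \<in> V"
    and "gdist V E v x \<noteq> gdist V E v y"
  shows "\<exists>r\<in>R. r \<noteq> v \<and> gdist V E r x \<noteq> gdist V E r y"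
proof (rule ccontr)
  assume "\<not> ?thesis"
  then have H: "\<And>r. r \<in> R \<Longrightarrow> r \<noteq> v \<Longrightarrow> gdist V E r x = gdist V E r y" by blast
  have sym: "\<forall>u w. E u w \<longrightarrow> E w u" using assms(1) by (simp add: simple_graph_def)
  have rr: "\<And>a b. a \<in> V \<Longrightarrow> b \<in> V \<Longrightarrow> reach V E a b" using assms(2) by (auto simp: connected_on_def)
  have vV: "v \<in> V" using assms(3) by (simp add: cut_vertex_def)
  let ?W = "V - {v}"
  obtain C1 C2 where C: "C1 \<in> components_on ?W E" "C2 \<in> components_on ?W E" "C1 \<noteq> C2"
    "C1 \<inter> R \<noteq> {}" "C2 \<inter> R \<noteq> {}" using assms(5) by blast
  obtain u1 where u1: "C1 = {w \<in> ?W. reach ?W E u1 w}" using C(1) unfolding components_on_def by blast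
  obtain u2 where u2: "C2 = {w \<in> ?W. reach ?W E u2 w}" using C(2) unfolding components_on_def by blast
  obtain r1 where r1: "r1 \<in> R" "r1 \<in> ?W" "reach ?W E u1 r1" using C(4) u1 by blast
  obtain r2 where r2: "r2 \<in> R" "r2 \<in> ?W" "reach ?W E u2 r2" using C(5) u2 by blast
  have notboth: "\<not> (reach ?W E r1 z \<and> reach ?W E r2 z)" for z
  proof
    assume h: "reach ?W E r1 z \<and> reach ?W E r2 z"
    have "reach ?W E z r2" using reach_sym[OF _ sym] h by blast
    then have "reach ?W E r1 r2" using h reach_trans by metis
    then have "reach ?W E u1 r2" using r1(3) reach_trans by metis
    moreover have "reach ?W E r2 u2" using r2(3) reach_sym[OF _ sym] by blast
    ultimately have 1: "reach ?W E u1 u2" using reach_trans by metis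
    then have 2: "reach ?W E u2 u1" using reach_sym[OF _ sym] by blast
    have "C1 = C2" unfolding u1 u2
    proof (intro Collect_cong conj_cong refl iffI)
      fix w assume "reach ?W E u1 w" then show "reach ?W E u2 w" using 2 reach_trans by metis
    next
      fix w assume "reach ?W E u2 w" then show "reach ?W E u1 w" using 1 reach_trans by metis
    qed
    with C(3) show False by blast
  qed
  have key: "gdist V E v z \<le> gdist V E v z'"
    if "r \<in> R" "r \<in> ?W" "\<not> reach ?W E r z" "z \<in> V" "z' \<in> V"
       "gdist V E r z = gdist V E r z'" for r z z'
  proof -
    have "gdist V E r z = gdist V E r v + gdist V E v z"
      using gdist_through[OF assms(2) _ that(4) that(3) vV] that(2) by simp
    moreover have "gdist V E r z' \<le> gdist V E r v + gdist V E v z'"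
      using gdist_tri[OF rr[of r v] rr[of v z']] that(2,5) vV by simp
    ultimately show ?thesis using that(6) by linarith
  qed
  have H1: "gdist V E r1 x = gdist V E r1 y" "gdist V E r2 x = gdist V E r2 y"
    using H r1 r2 by auto
  have "gdist V E v x \<le> gdist V E v y"
    using notboth[of x] key[OF r1(1,2) _ assms(6,7) H1(1)] key[OF r2(1,2) _ assms(6,7) H1(2)] by argo
  moreover have "gdist V E v y \<le> gdist V E v x"
    using notboth[of y] key[OF r1(1,2) _ assms(7,6) H1(1)[symmetric]] key[OF r2(1,2) _ assms(7,6) H1(2)[symmetric]] by argo
  ultimately show False using assms(8) by linarith
qed

end
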